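(* The sequence $(\mathrm{mr}(d)^d)_{d\ \mathrm{even},\,d\ge 2}$ has an accumulation point in the interval $[1,U]$, where $U=\tfrac{7+3\sqrt5}{2}=6.854102\ldots$.
   Context: For an algebraic integer $\alpha$ with conjugates $\alpha_1,\dots,\alpha_d$, $\operatorname{house}(\alpha)=\max_i|\alpha_i|$. An algebraic integer is reciprocal if $1/\alpha$ is a conjugate of $\alpha$. $\mathrm{mr}(d)$ denotes the minimum of $\operatorname{house}(\alpha)$ over all reciprocal algebraic integers $\alpha$ of degree $d$ that are not roots of unity. *)

theory Defs
  imports "HOL-Analysis.Analysis" "HOL-Computational_Algebra.Computational_Algebra"
begin

definition min_poly_Q :: "complex \<Rightarrow> rat poly" where
  "min_poly_Q \<alpha> = (THE p. lead_coeff p = 1 \<and> irreducible p \<and> poly (map_poly of_rat p) \<alpha> = 0)"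

definition alg_degree :: "complex \<Rightarrow> nat" where
  "alg_degree \<alpha> = degree (min_poly_Q \<alpha>)"

definition conjugates :: "complex \<Rightarrow> complex set" where
  "conjugates \<alpha> = {z. poly (map_poly of_rat (min_poly_Q \<alpha>)) z = 0}"

definition house :: "complex \<Rightarrow> real" where
  "house \<alpha> = Max (norm ` conjugates \<alpha>)"

definition reciprocal :: "complex \<Rightarrow> bool" where
  "reciprocal \<alpha> \<longleftrightarrow> \<alpha> \<noteq> 0 \<and> 1 / \<alpha> \<in> conjugates \<alpha>"

definition root_of_unity :: "complex \<Rightarrow> bool" where
  "root_of_unity \<alpha> \<longleftrightarrow> (\<exists>n>0. \<alpha> ^ n = 1)"

definition mr :: "nat \<Rightarrow> real" where
  "mr d = Inf {house \<alpha> | \<alpha>. algebraic_int \<alpha> \<and> reciprocal \<alpha> \<and> alg_degree \<alpha> = d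
                              \<and> \<not> root_of_unity \<alpha>}"

end

theory Submission
  imports Defs "HOL-Computational_Algebra.Field_as_Ring"
begin


lemma prime5: "prime (5::int)"
proof -
  have "{2..<5::int} = {2,3,4}" by auto
  thus ?thesis by (simp add: prime_int_iff')
qed

lemma X_pow: "([:0,1:]^m :: 'a::comm_ring_1 poly) = monom 1 m" by (simp add: monom_altdef)

lemma coeff5: "(5::int poly) dvd Q \<Longrightarrow> (5::int) dvd coeff Q i"
  by (auto simp: numeral_poly)

lemma eis_aux:
  fixes F G H :: "int poly"
  assumes F: "F = G * H" and dG: "degree G > 0" and dH: "degree H > 0"
    and lF: "lead_coeff F = 1"
    and dv: "\<And>i. i < degree F \<Longrightarrow> (5::int) dvd coeff F i"
    and n25: "\<not> (25::int) dvd coeff F 0"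
    and G0: "(5::int) dvd coeff G 0"
  shows False
proof -
  have nz: "G \<noteq> 0" "H \<noteq> 0" using F lF by auto
  have deg: "degree F = degree G + degree H" using F nz degree_mult_eq by blast
  have "lead_coeff G * lead_coeff H = 1" using F lF by (simp add: lead_coeff_mult)
  note lGH = this
  have lG: "\<not> 5 dvd lead_coeff G"
  proof
    assume "5 dvd lead_coeff G"
    hence "5 dvd lead_coeff G * lead_coeff H" by (rule dvd_mult2)
    hence "(5::int) dvd 1" using lGH by simp
    thus False by simp
  qed
  have F0: "coeff F 0 = coeff G 0 * coeff H 0" using F by (simp add: coeff_mult)
  have H0: "\<not> 5 dvd coeff H 0"
  proof
    assume "5 dvd coeff H 0"
    then have "5*5 dvd coeff G 0 * coeff H 0" using G0 mult_dvd_mono by blast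
    thus False using n25 F0 by simp
  qed
  define i where "i = (LEAST i. \<not> 5 dvd coeff G i)"
  have ex: "\<not> 5 dvd coeff G (degree G)" using lG by simp
  have i1: "\<not> 5 dvd coeff G i" unfolding i_def by (rule LeastI) (rule ex)
  have i2: "i \<le> degree G" unfolding i_def by (rule Least_le) (rule ex)
  have i3: "\<And>j. j < i \<Longrightarrow> 5 dvd coeff G j" unfolding i_def using not_less_Least by blast
  have "i < degree F" using i2 deg dH by simp
  hence A: "5 dvd coeff F i" by (rule dv)
  have B: "coeff F i = (\<Sum>j<i. coeff G j * coeff H (i - j)) + coeff G i * coeff H 0"
    using F by (simp add: coeff_mult lessThan_Suc_atMost[symmetric])
  have C: "5 dvd (\<Sum>j<i. coeff G j * coeff H (i - j))" by (intro dvd_sum) (simp add: i3)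
  have "5 dvd coeff G i * coeff H 0" using A B dvd_add_right_iff[OF C] by simp
  hence "5 dvd coeff G i \<or> 5 dvd coeff H 0" using prime_dvd_mult_iff[OF prime5] by blast
  thus False using i1 H0 by blast
qed

lemma eisenstein5:
  fixes F G H :: "int poly"
  assumes F: "F = G * H"
    and lF: "lead_coeff F = 1"
    and dv: "\<And>i. i < degree F \<Longrightarrow> (5::int) dvd coeff F i"
    and n25: "\<not> (25::int) dvd coeff F 0"
  shows "degree G = 0 \<or> degree H = 0"
proof (rule ccontr)
  assume "\<not> ?thesis"
  hence dG: "degree G > 0" and dH: "degree H > 0" by auto
  have nz: "G \<noteq> 0" "H \<noteq> 0" using F lF by auto
  have deg: "degree F = degree G + degree H" using F nz degree_mult_eq by blast
  have F0: "coeff F 0 = coeff G 0 * coeff H 0" using F by (simp add: coeff_mult)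
  have "5 dvd coeff F 0" using dv deg dG by simp
  hence "5 dvd coeff G 0 \<or> 5 dvd coeff H 0" using F0 prime_dvd_mult_iff[OF prime5] by simp
  thus False
  proof
    assume "5 dvd coeff G 0" thus False using eis_aux[OF F dG dH lF dv n25] by blast
  next
    assume "5 dvd coeff H 0" thus False using eis_aux[of F H G] F dG dH lF dv n25 by (simp add: mult.commute)
  qed
qed

lemma cong5: "(5::int poly) dvd [:1,1:]^(5^k) - ([:0,1:]^(5^k) + 1)"
proof (induction k)
  case 0
  have "[:0,1:] + 1 = ([:1,1::int:])" by (simp add: one_pCons)
  thus ?case by simp
next
  case (Suc k)
  define A :: "int poly" where "A = [:1,1:]^(5^k)"
  define Y :: "int poly" where "Y = [:0,1:]^(5^k)"
  define B where "B = Y + 1"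
  have e1: "[:1,1:]^(5^Suc k) = A^5" unfolding A_def by (simp add: power_mult[symmetric] mult.commute)
  have e2: "([:0,1:]^(5^Suc k) :: int poly) = Y^5" unfolding Y_def by (simp add: power_mult[symmetric] mult.commute)
  have d1: "5 dvd A - B" using Suc.IH unfolding A_def B_def Y_def .
  have q1: "A^5 - B^5 = (A-B)*(A^4 + A^3*B + A^2*B^2 + A*B^3 + B^4)" by (simp add: algebra_simps power_numeral_reduce)
  have d2: "5 dvd A^5 - B^5" unfolding q1 by (rule dvd_mult2[OF d1])
  have q2: "B^5 - (Y^5 + 1) = 5 * (Y^4 + 2*Y^3 + 2*Y^2 + Y)" unfolding B_def by (simp add: algebra_simps power_numeral_reduce)
  have d3: "5 dvd B^5 - (Y^5 + 1)" unfolding q2 by (rule dvd_triv_left)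
  have q3: "A^5 - (Y^5 + 1) = (A^5 - B^5) + (B^5 - (Y^5 + 1))" by simp
  have "5 dvd A^5 - (Y^5 + 1)" unfolding q3 using d2 d3 by (rule dvd_add)
  thus ?case unfolding e1 e2 .
qed




lemma pcompose_one1: "1 \<circ>\<^sub>p q = 1"
  by (simp add: one_pCons pcompose_pCons)

lemma pcompose_pow: "(p ^ n) \<circ>\<^sub>p q = (p \<circ>\<^sub>p q) ^ (n::nat)" for p q :: "'a::comm_ring_1 poly"
  by (induction n) (simp_all add: pcompose_mult pcompose_one1)

definition fpol :: "nat \<Rightarrow> int poly" where
  "fpol k = [:0,1:]^(2*5^k) + smult 3 ([:0,1:]^(5^k)) + 1"

lemma fpol_comp: "fpol k \<circ>\<^sub>p [:1,1:] = [:1,1:]^(2*5^k) + smult 3 ([:1,1:]^(5^k)) + 1"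
  by (simp add: fpol_def pcompose_add pcompose_smult pcompose_pow pcompose_pCons pcompose_one1)

lemma fpol_comp_cong: "(5::int poly) dvd (fpol k \<circ>\<^sub>p [:1,1:]) - [:0,1:]^(2*5^k)"
proof -
  define A :: "int poly" where "A = [:1,1:]^(5^k)"
  define Y :: "int poly" where "Y = [:0,1:]^(5^k)"
  define B where "B = Y + 1"
  have d1: "5 dvd A - B" using cong5[of k] unfolding A_def B_def Y_def .
  have a2: "[:1,1:]^(2*5^k) = A^2" unfolding A_def by (simp add: power_mult[symmetric] mult.commute)
  have y2: "([:0,1:]^(2*5^k) :: int poly) = Y^2" unfolding Y_def by (simp add: power_mult[symmetric] mult.commute)
  have e0: "smult 3 A = 3 * A" by (simp add: numeral_poly)
  have e: "(fpol k \<circ>\<^sub>p [:1,1:]) - [:0,1:]^(2*5^k) = (A - B) * (A + B + 3) + 5 * (Y + 1)"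
    unfolding fpol_comp a2 y2 A_def[symmetric] e0 B_def by (simp add: algebra_simps power2_eq_square)
  show ?thesis unfolding e using d1 by (intro dvd_add dvd_mult2) auto
qed

lemma degree_fpol: "degree (fpol k) = 2*5^k"
proof -
  have "degree (smult 3 ([:0,1:]^(5^k)) + 1 :: int poly) < 2*5^k"
    by (rule le_less_trans[OF degree_add_le_max]) (simp add: degree_power_eq)
  thus ?thesis unfolding fpol_def
    by (subst add.assoc, subst degree_add_eq_left) (simp_all add: degree_power_eq)
qed

lemma lead_fpol: "lead_coeff (fpol k) = 1"
proof -
  have "coeff (fpol k) (2*5^k) = 1" unfolding fpol_def by (simp add: X_pow)
  thus ?thesis by (simp add: degree_fpol)
qed

lemma fpol_int_irr:
  assumes "fpol k = G * H" shows "degree G = 0 \<or> degree H = 0"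
proof -
  define F where "F = fpol k \<circ>\<^sub>p [:1,1:]"
  have FGH: "F = (G \<circ>\<^sub>p [:1,1:]) * (H \<circ>\<^sub>p [:1,1:])" using assms by (simp add: F_def pcompose_mult)
  have dF: "degree F = 2*5^k" by (simp add: F_def degree_pcompose degree_fpol)
  have lF: "lead_coeff F = 1" by (simp add: F_def lead_coeff_comp lead_fpol)
  have dv: "5 dvd coeff F i" if "i < degree F" for i
  proof -
    have "(5::int) dvd coeff (F - [:0,1:]^(2*5^k)) i" using fpol_comp_cong[of k] coeff5 F_def by blast
    thus ?thesis using that dF by (simp add: X_pow)
  qed
  have "poly (fpol k) 1 = 5" by (simp add: fpol_def)
  hence "coeff F 0 = 5" by (simp add: F_def poly_0_coeff_0[symmetric] poly_pcompose)
  hence n25: "\<not> (25::int) dvd coeff F 0" by simp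
  have "degree (G \<circ>\<^sub>p [:1,1:]) = 0 \<or> degree (H \<circ>\<^sub>p [:1,1:]) = 0"
    by (rule eisenstein5[OF FGH lF _ n25]) (rule dv)
  thus ?thesis by (simp add: degree_pcompose)
qed



lemma map_of_int_inj: "map_poly (of_int :: int \<Rightarrow> rat) P = map_poly of_int Q \<Longrightarrow> P = Q"
  by (rule poly_eqI) (metis (no_types) coeff_map_poly of_int_0 of_int_eq_iff)

lemma degree_map_of_int [simp]: "degree (map_poly (of_int :: int \<Rightarrow> rat) P) = degree P"
  by (rule degree_map_poly) simp

lemma map_of_int_mult: "map_poly (of_int :: int \<Rightarrow> 'a::comm_ring_1) (p*q) = map_poly of_int p * map_poly of_int q"
  by (rule poly_eqI) (simp add: coeff_map_poly coeff_mult of_int_sum)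

lemma map_of_rat_mult: "map_poly (of_rat :: rat \<Rightarrow> 'a::field_char_0) (p*q) = map_poly of_rat p * map_poly of_rat q"
  by (rule poly_eqI) (simp add: coeff_map_poly coeff_mult of_rat_sum of_rat_mult)

lemma clear_denom: "\<exists>c::int. c \<noteq> 0 \<and> (\<exists>G. map_poly of_int G = smult (of_int c) (g :: rat poly))"
proof (induction g rule: pCons_induct)
  case 0 show ?case by (intro exI[of _ "1::int"] conjI exI[of _ "0::int poly"]) simp_all
next
  case (pCons a g)
  obtain c' G' where c': "c' \<noteq> 0" "map_poly of_int G' = smult (of_int c') g" using pCons.IH by blast
  obtain r s where rs: "quotient_of a = (r, s)" by (cases "quotient_of a")
  have s: "s > 0" using quotient_of_denom_pos[OF rs] .
  have a: "a = of_int r / of_int s" using quotient_of_div[OF rs] .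
  have "map_poly of_int (pCons (r * c') (smult s G')) = smult (of_int (c' * s)) (pCons a g)"
  proof -
    have "map_poly (of_int :: int \<Rightarrow> rat) (pCons (r * c') (smult s G')) = pCons (of_int (r * c')) (smult (of_int s) (map_poly of_int G'))"
      by (simp add: map_poly_pCons map_poly_smult)
    also have "\<dots> = pCons (of_int (c' * s) * a) (smult (of_int (c' * s)) g)"
      using s by (simp add: c' a mult.commute)
    also have "\<dots> = smult (of_int (c' * s)) (pCons a g)" by simp
    finally show ?thesis .
  qed
  moreover have "c' * s \<noteq> 0" using c' s by simp
  ultimately show ?case by blast
qed

lemma gauss_irr:
  fixes f :: "int poly"
  assumes lf: "lead_coeff f = 1" and df: "degree f > 0"
    and nf: "\<And>G H. f = G * H \<Longrightarrow> degree G = 0 \<or> degree H = 0"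
  shows "irreducible (map_poly of_int f :: rat poly)"
proof (rule irreducibleI)
  let ?fq = "map_poly of_int f :: rat poly"
  have f0: "f \<noteq> 0" using lf by auto
  show nz: "?fq \<noteq> 0" using f0 by (metis degree_map_of_int df degree_0 less_irrefl)
  show "\<not> is_unit ?fq" using is_unit_iff_degree[OF nz] df by simp
  fix g h assume gh: "?fq = g * h"
  have g0: "g \<noteq> 0" and h0: "h \<noteq> 0" using gh nz by auto
  obtain cg G where cg: "cg \<noteq> 0" "map_poly of_int G = smult (of_int cg) g" using clear_denom by blast
  obtain ch H where ch: "ch \<noteq> 0" "map_poly of_int H = smult (of_int ch) h" using clear_denom by blast
  define c where "c = cg * ch"
  have c0: "c \<noteq> 0" using cg ch by (simp add: c_def)
  have "map_poly of_int (G * H) = (map_poly of_int (smult c f) :: rat poly)"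
    by (simp add: map_of_int_mult cg ch gh c_def map_poly_smult mult_ac)
  hence GH: "G * H = smult c f" by (rule map_of_int_inj)
  have dG: "degree G = degree g" using arg_cong[OF cg(2), of degree] cg(1) by simp
  have dH: "degree H = degree h" using arg_cong[OF ch(2), of degree] ch(1) by simp
  have "content f dvd coeff f (degree f)" by (rule content_dvd_coeff)
  hence "content f dvd 1" using lf by simp
  hence cf: "content f = 1" by (metis normalize_content is_unit_normalize)
  have "content G * content H = \<bar>c\<bar>" using arg_cong[OF GH, of content] cf by (simp add: content_mult content_smult)
  have "smult c f = smult (content G * content H) (primitive_part G * primitive_part H)"
    unfolding GH[symmetric]
    by (metis content_times_primitive_part mult_smult_left mult_smult_right smult_smult)
  also have "\<dots> = smult \<bar>c\<bar> (primitive_part G * primitive_part H)" using \<open>content G * content H = \<bar>c\<bar>\<close> by simp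
  finally have e: "smult c f = smult \<bar>c\<bar> (primitive_part G * primitive_part H)" .
  have "smult \<bar>c\<bar> (smult (sgn c) f) = smult \<bar>c\<bar> (primitive_part G * primitive_part H)"
    unfolding e[symmetric] smult_smult by (simp add: mult.commute[of "\<bar>c\<bar>"] sgn_mult_abs)
  moreover have "\<bar>c\<bar> \<noteq> 0" using c0 by simp
  ultimately have "smult (sgn c) f = primitive_part G * primitive_part H" using smult_cancel by blast
  hence "smult (sgn c) (smult (sgn c) f) = smult (sgn c) (primitive_part G) * primitive_part H" by simp
  hence "f = smult (sgn c) (primitive_part G) * primitive_part H" using c0 by (simp add: sgn_mult_self_eq)
  from nf[OF this] have "degree G = 0 \<or> degree H = 0" using c0 by (simp add: degree_primitive_part sgn_0_0)
  thus "is_unit g \<or> is_unit h" using dG dH is_unit_iff_degree g0 h0 by auto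
qed



lemma map_of_rat_add: "map_poly (of_rat :: rat \<Rightarrow> 'a::field_char_0) (p+q) = map_poly of_rat p + map_poly of_rat q"
  by (rule poly_eqI) (simp add: coeff_map_poly of_rat_add)

lemma unit_no_root:
  fixes g :: "rat poly"
  assumes "is_unit g" shows "poly (map_poly (of_rat :: rat \<Rightarrow> complex) g) x \<noteq> 0"
proof -
  have g0: "g \<noteq> 0" using assms by auto
  hence "degree g = 0" using assms is_unit_iff_degree by blast
  then obtain a where a: "g = [:a:]" "a \<noteq> 0" using g0 by (metis degree_eq_zeroE pCons_0_0)
  thus ?thesis by (simp add: map_poly_pCons)
qed

lemma minpoly_unique:
  fixes p q :: "rat poly" and x :: complex
  assumes lp: "lead_coeff p = 1" and lq: "lead_coeff q = 1"
    and ip: "irreducible p" and iq: "irreducible q"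
    and rp: "poly (map_poly of_rat p) x = 0" and rq: "poly (map_poly of_rat q) x = 0"
  shows "p = q"
proof -
  define g where "g = gcd p q"
  have "fst (bezout_coefficients p q) * p + snd (bezout_coefficients p q) * q = g"
    unfolding g_def by (rule bezout_coefficients_fst_snd)
  hence "poly (map_poly (of_rat :: rat \<Rightarrow> complex) g) x = 0"
    using rp rq by (metis map_of_rat_add map_of_rat_mult poly_add poly_mult mult_zero_right add_0)
  hence ng: "\<not> is_unit g" using unit_no_root by blast
  have "g dvd p" unfolding g_def by simp
  hence "p dvd g" using ip ng irreducible_altdef by blast
  hence "p dvd q" unfolding g_def using dvd_trans gcd_dvd2 by blast
  then obtain r where r: "q = p * r" by (elim dvdE)
  have "\<not> is_unit p" using ip by (simp add: irreducible_def)
  hence "is_unit r" using iq r by (metis irreducibleD)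
  hence r0: "r \<noteq> 0" by auto
  hence "degree r = 0" using \<open>is_unit r\<close> is_unit_iff_degree by blast
  then obtain c where c: "r = [:c:]" by (metis degree_eq_zeroE)
  have "lead_coeff q = lead_coeff p * c" using r c by (simp add: lead_coeff_mult)
  hence "c = 1" using lp lq by simp
  thus ?thesis using r c by simp
qed

lemma irr_factor_root:
  fixes x :: complex
  shows "Q \<noteq> 0 \<Longrightarrow> poly (map_poly of_rat Q) x = 0 \<Longrightarrow> \<exists>p. irreducible p \<and> poly (map_poly of_rat p) x = 0"
proof (induction "degree Q" arbitrary: Q rule: less_induct)
  case less
  show ?case
  proof (cases "irreducible Q")
    case True thus ?thesis using less.prems by blast
  next
    case False
    have nu: "\<not> is_unit Q" using unit_no_root less.prems by blast
    obtain a b where ab: "Q = a * b" "\<not> is_unit a" "\<not> is_unit b"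
      using False less.prems(1) nu unfolding irreducible_def by blast
    have a0: "a \<noteq> 0" and b0: "b \<noteq> 0" using ab less.prems(1) by auto
    have da: "degree a > 0" using ab(2) a0 is_unit_iff_degree by blast
    have db: "degree b > 0" using ab(3) b0 is_unit_iff_degree by blast
    have dQ: "degree Q = degree a + degree b" using ab a0 b0 degree_mult_eq by blast
    have "poly (map_poly of_rat a) x * poly (map_poly of_rat b) x = 0"
      using less.prems(2) ab(1) by (simp add: map_of_rat_mult)
    hence "poly (map_poly of_rat a) x = 0 \<or> poly (map_poly of_rat b) x = 0" by simp
    thus ?thesis
    proof (elim disjE)
      assume "poly (map_poly of_rat a) x = 0"
      thus ?thesis using less.hyps[of a] dQ db a0 by simp
    next
      assume "poly (map_poly of_rat b) x = 0"
      thus ?thesis using less.hyps[of b] dQ da b0 by simp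
    qed
  qed
qed

lemma minpoly_exists:
  fixes x :: complex
  assumes "algebraic x"
  shows "\<exists>p. lead_coeff p = 1 \<and> irreducible p \<and> poly (map_poly of_rat p) x = 0"
proof -
  obtain P where P: "P \<noteq> 0" "poly (map_poly of_int P) x = 0" using assms by (elim algebraicE')
  define Q :: "rat poly" where "Q = map_poly of_int P"
  have mq: "map_poly (of_rat :: rat \<Rightarrow> complex) Q = map_poly of_int P"
    unfolding Q_def by (rule poly_eqI) (simp add: coeff_map_poly)
  have "Q \<noteq> 0" using P by (metis Q_def degree_map_of_int map_of_int_inj map_poly_0)
  then obtain p where p: "irreducible p" "poly (map_poly of_rat p) x = 0"
    using irr_factor_root[of Q x] P mq by auto
  define c where "c = lead_coeff p"
  have c0: "c \<noteq> 0" using p(1) by (auto simp: c_def)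
  define p' where "p' = [:inverse c:] * p"
  have u: "is_unit [:inverse c:]" using c0 by (simp add: is_unit_const_poly_iff dvd_field_iff)
  have "irreducible p'" unfolding p'_def by (subst irreducible_mult_unit_left[OF u]) (rule p(1))
  moreover have "lead_coeff p' = 1" unfolding p'_def using c0 by (simp add: lead_coeff_mult c_def)
  moreover have "poly (map_poly of_rat p') x = 0" unfolding p'_def map_of_rat_mult poly_mult p(2) by simp
  ultimately show ?thesis by blast
qed

lemma min_poly_Q_props:
  assumes "algebraic x"
  shows "lead_coeff (min_poly_Q x) = 1 \<and> irreducible (min_poly_Q x) \<and> poly (map_poly of_rat (min_poly_Q x)) x = 0"
proof -
  obtain p where p: "lead_coeff p = 1 \<and> irreducible p \<and> poly (map_poly of_rat p) x = 0"
    using minpoly_exists[OF assms] by blast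
  show ?thesis unfolding min_poly_Q_def
    by (rule theI[of _ p]) (use p minpoly_unique in blast)+
qed

lemma min_poly_Q_eq:
  assumes "lead_coeff p = 1" "irreducible p" "poly (map_poly of_rat p) x = 0"
  shows "min_poly_Q x = p"
  unfolding min_poly_Q_def
  by (rule the_equality) (use assms minpoly_unique in blast)+



lemma house_ge1:
  assumes ai: "algebraic_int x" and rx: "reciprocal x"
  shows "house x \<ge> 1"
proof -
  have al: "algebraic x" using ai by blast
  note mp = min_poly_Q_props[OF al]
  define P where "P = map_poly (of_rat :: rat \<Rightarrow> complex) (min_poly_Q x)"
  have "coeff P (degree (min_poly_Q x)) = 1" using mp by (simp add: P_def coeff_map_poly)
  hence P0: "P \<noteq> 0" by auto
  have fin: "finite (conjugates x)" unfolding conjugates_def P_def[symmetric] using poly_roots_finite[OF P0] .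
  have xin: "x \<in> conjugates x" unfolding conjugates_def using mp by simp
  have x0: "x \<noteq> 0" and ix: "1 / x \<in> conjugates x" using rx by (auto simp: reciprocal_def)
  have h1: "norm x \<le> house x" unfolding house_def using fin xin by (intro Max_ge) auto
  have h2: "norm (1/x) \<le> house x" unfolding house_def using fin ix by (intro Max_ge) auto
  show ?thesis
  proof (cases "norm x \<ge> 1")
    case True thus ?thesis using h1 by linarith
  next
    case False
    hence "1 \<le> 1 / norm x" using x0 by (simp add: field_simps)
    thus ?thesis using h2 by (simp add: norm_divide)
  qed
qed

lemma map_of_int_add: "map_poly (of_int :: int \<Rightarrow> 'a::comm_ring_1) (p+q) = map_poly of_int p + map_poly of_int q"
  by (rule poly_eqI) (simp add: coeff_map_poly)

lemma poly_fpol: "poly (map_poly (of_int :: int \<Rightarrow> complex) (fpol k)) z = z^(2*5^k) + 3 * z^(5^k) + 1"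
proof -
  have "map_poly (of_int :: int \<Rightarrow> complex) (fpol k) = monom 1 (2*5^k) + smult 3 (monom 1 (5^k)) + 1"
    unfolding fpol_def X_pow map_of_int_add by (simp add: map_poly_monom map_poly_smult)
  thus ?thesis by (simp add: poly_monom)
qed

definition beta :: real where "beta = (3 + sqrt 5) / 2"
definition beta' :: real where "beta' = (3 - sqrt 5) / 2"

lemma sqrt5: "sqrt 5 > 2" "sqrt 5 < 3"
proof -
  show "sqrt 5 > 2" by (rule real_less_rsqrt) simp
  show "sqrt 5 < 3" using real_sqrt_less_iff[of 5 9] by simp
qed
lemma s5: "sqrt 5 * sqrt 5 = 5" by simp

lemma beta_facts: "beta > 1" "beta' > 0" "beta' < 1" "beta * beta' = 1" "beta + beta' = 3"
  "beta^2 = (7 + 3 * sqrt 5) / 2"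
proof -
  show "beta > 1" using sqrt5 by (simp add: beta_def)
  show "beta' > 0" using sqrt5 by (simp add: beta'_def)
  show "beta' < 1" using sqrt5 by (simp add: beta'_def)
  show "beta + beta' = 3" unfolding beta'_def beta_def by (simp add: add_divide_distrib[symmetric])
  have "beta * beta' = (9 - sqrt 5 * sqrt 5) / 4" by (simp add: beta'_def beta_def algebra_simps)
  thus "beta * beta' = 1" by (simp only: s5) simp
  have "beta^2 = (9 + 6 * sqrt 5 + sqrt 5 * sqrt 5) / 4" by (simp add: beta_def power2_eq_square algebra_simps)
  thus "beta^2 = (7 + 3 * sqrt 5) / 2" by (simp only: s5) simp
qed
lemma quad_roots:
  fixes w :: complex
  assumes "w^2 + 3*w + 1 = 0"
  shows "norm w \<le> beta"
proof -
  have "(w + of_real beta) * (w + of_real beta') = w^2 + of_real (beta + beta') * w + of_real (beta * beta')"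
    unfolding of_real_add of_real_mult power2_eq_square by algebra
  also have "\<dots> = w^2 + 3*w + 1" unfolding beta_facts(4,5) by simp
  finally have "(w + of_real beta) * (w + of_real beta') = 0" using assms by simp
  hence "w + of_real beta = 0 \<or> w + of_real beta' = 0" by simp
  thus ?thesis
  proof
    assume "w + of_real beta = 0"
    hence "w = - of_real beta" by (simp only: eq_neg_iff_add_eq_0)
    thus ?thesis using beta_facts(1) by simp
  next
    assume "w + of_real beta' = 0"
    hence "w = - of_real beta'" by (simp only: eq_neg_iff_add_eq_0)
    thus ?thesis using beta_facts(1-3) by simp
  qed
qed

lemma fpol_rat_props:
  shows "lead_coeff (map_poly (of_int :: int \<Rightarrow> rat) (fpol k)) = 1"
    and "irreducible (map_poly (of_int :: int \<Rightarrow> rat) (fpol k))"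
    and "degree (map_poly (of_int :: int \<Rightarrow> rat) (fpol k)) = 2*5^k"
proof -
  show "lead_coeff (map_poly (of_int :: int \<Rightarrow> rat) (fpol k)) = 1"
    using lead_fpol[of k] by (simp add: coeff_map_poly)
  show "irreducible (map_poly (of_int :: int \<Rightarrow> rat) (fpol k))"
    by (rule gauss_irr[OF lead_fpol _ fpol_int_irr]) (simp add: degree_fpol)
  show "degree (map_poly (of_int :: int \<Rightarrow> rat) (fpol k)) = 2*5^k" by (simp add: degree_fpol)
qed

lemma map_rat_int: "map_poly (of_rat :: rat \<Rightarrow> complex) (map_poly of_int p) = map_poly of_int p"
  by (rule poly_eqI) (simp add: coeff_map_poly)



lemma mr_bounds:
  shows "1 \<le> mr (2*5^k) \<and> mr (2*5^k) \<le> root (5^k) beta"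
proof -
  define n :: nat where "n = 5^k"
  have n0: "n > 0" and odd: "odd n" by (simp_all add: n_def)
  define r where "r = root n beta"
  define a :: complex where "a = of_real (root n (- beta))"
  have ra: "root n (- beta) = - r" by (simp add: r_def real_root_minus)
  have r1: "r > 1" using beta_facts n0 by (simp add: r_def real_root_gt_1_iff)
  have an: "a ^ n = - of_real beta" unfolding a_def using odd by (simp flip: of_real_power add: odd_real_root_pow)
  have na: "norm a = r" unfolding a_def ra using r1 by simp
  define fq where "fq = map_poly (of_int :: int \<Rightarrow> rat) (fpol k)"
  have pe: "poly (map_poly of_rat fq) z = z^(2*n) + 3 * z^n + 1" for z :: complex
    unfolding fq_def map_rat_int poly_fpol n_def ..
  have root_a: "poly (map_poly of_rat fq) a = 0"
  proof -
    have "a^(2*n) = of_real (beta^2)" by (simp add: power_mult an mult.commute[of 2])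
    hence "poly (map_poly of_rat fq) a = of_real (beta^2 - 3 * beta + 1)" unfolding pe by (simp add: an)
    also have "beta^2 - 3 * beta + 1 = 0" using sqrt5 by (simp add: beta_def power2_eq_square field_simps)
    finally show ?thesis by simp
  qed
  have mq: "min_poly_Q a = fq"
    by (rule min_poly_Q_eq) (use fpol_rat_props root_a in \<open>simp_all add: fq_def\<close>)
  have deg: "alg_degree a = 2*5^k" unfolding alg_degree_def mq fq_def using fpol_rat_props by simp
  have conj: "conjugates a = {z. z^(2*n) + 3 * z^n + 1 = 0}" unfolding conjugates_def mq pe ..
  have ai: "algebraic_int a"
    unfolding algebraic_int_altdef_ipoly
    by (rule exI[of _ "fpol k"]) (use root_a lead_fpol in \<open>simp add: fq_def map_rat_int\<close>)
  have a0: "a \<noteq> 0" using na r1 by auto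
  have rec: "reciprocal a"
  proof -
    have "(1/a)^(2*n) + 3 * (1/a)^n + 1 = (a^(2*n) + 3 * a^n + 1) / a^(2*n)"
      using a0 by (simp add: field_simps power_mult mult.commute[of 2] power2_eq_square)
    also have "\<dots> = 0" using root_a unfolding pe by simp
    finally show ?thesis unfolding reciprocal_def conj using a0 by simp
  qed
  have nru: "\<not> root_of_unity a"
  proof
    assume "root_of_unity a"
    then obtain m where m: "m > 0" "a^m = 1" by (auto simp: root_of_unity_def)
    hence "norm (a^m) = 1" by simp
    hence "r^m = 1" using na by (simp add: norm_power)
    moreover have "r^m > 1" using r1 m(1) by (simp add: one_less_power)
    ultimately show False by simp
  qed
  have hb: "house a \<le> r"
  proof -
    have fin: "finite (conjugates a)"
    proof -
      have "coeff (map_poly (of_rat :: rat \<Rightarrow> complex) fq) (degree fq) = 1"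
        using fpol_rat_props(1)[of k] unfolding fq_def by (simp add: coeff_map_poly)
      hence "map_poly (of_rat :: rat \<Rightarrow> complex) fq \<noteq> 0" by auto
      thus ?thesis unfolding conjugates_def mq by (rule poly_roots_finite)
    qed
    have ain: "a \<in> conjugates a" using root_a unfolding conjugates_def mq by simp
    have "norm z \<le> r" if "z \<in> conjugates a" for z
    proof -
      have "(z^n)^2 + 3 * z^n + 1 = 0" using that unfolding conj by (simp add: power_mult[symmetric] mult.commute)
      hence "norm (z^n) \<le> beta" by (rule quad_roots)
      hence "norm z ^ n \<le> r ^ n" using n0 beta_facts by (simp add: r_def norm_power real_root_pow_pos)
      show ?thesis
    proof (rule ccontr)
      assume "\<not> norm z \<le> r"
      hence "r < norm z" by simp
      hence "r^n < norm z ^ n" using power_strict_mono[of r "norm z" n] r1 n0 by simp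
      thus False using \<open>norm z ^ n \<le> r ^ n\<close> by simp
    qed
    qed
    thus ?thesis unfolding house_def using fin ain by (intro Max.boundedI) auto
  qed
  define S where "S = {house \<alpha> | \<alpha>. algebraic_int \<alpha> \<and> reciprocal \<alpha> \<and> alg_degree \<alpha> = 2*5^k \<and> \<not> root_of_unity \<alpha>}"
  have aS: "house a \<in> S" unfolding S_def using ai rec deg nru by blast
  have lb: "\<forall>y\<in>S. 1 \<le> y" unfolding S_def using house_ge1 by blast
  have "1 \<le> Inf S" using aS lb by (intro cInf_greatest) auto
  moreover have "Inf S \<le> house a" using aS lb by (intro cInf_lower) (auto simp: bdd_below_def)
  ultimately show ?thesis using hb unfolding mr_def S_def[symmetric] r_def n_def by simp
qed



theorem corollary4:
  shows "\<exists>L \<in> {1 .. (7 + 3 * sqrt 5) / 2}. \<exists>r :: nat \<Rightarrow> nat.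
           strict_mono r \<and> (\<forall>k. even (r k) \<and> r k \<ge> 2) \<and>
           ((\<lambda>k. mr (r k) ^ r k) \<longlongrightarrow> L) sequentially"
proof -
  define U :: real where "U = (7 + 3 * sqrt 5) / 2"
  define s where "s k = mr (2*5^k) ^ (2*5^k)" for k :: nat
  have sin: "s k \<in> {1..U}" for k
  proof -
    have b: "1 \<le> mr (2*5^k)" "mr (2*5^k) \<le> root (5^k) beta" using mr_bounds[of k] by auto
    have "1 \<le> s k" unfolding s_def using b(1) by (rule one_le_power)
    moreover have "s k \<le> root (5^k) beta ^ (2*5^k)" unfolding s_def
      using b by (intro power_mono) auto
    moreover have "root (5^k) beta ^ (2*5^k) = U"
    proof -
      have "root (5^k) beta ^ (2*5^k) = (root (5^k) beta ^ (5^k))^2"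
        by (simp add: power_mult[symmetric] mult.commute)
      also have "root (5^k) beta ^ (5^k) = beta" using beta_facts(1) by (intro real_root_pow_pos) auto
      finally show ?thesis using beta_facts(6) by (simp add: U_def)
    qed
    ultimately show ?thesis by simp
  qed
  have "seq_compact {1..U}" by (rule compact_imp_seq_compact) (rule compact_Icc)
  then obtain L r where L: "L \<in> {1..U}" "strict_mono r" "(s \<circ> r) \<longlonglongrightarrow> L"
    unfolding seq_compact_def using sin by blast
  define r' :: "nat \<Rightarrow> nat" where "r' k = 2 * 5 ^ (r k)" for k
  have sm: "strict_mono r'"
  proof (rule strict_monoI)
    fix a b :: nat assume "a < b"
    hence "r a < r b" using L(2) by (simp add: strict_mono_less)
    hence "(5::nat) ^ r a < 5 ^ r b" by (rule power_strict_increasing) simp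
    thus "r' a < r' b" by (simp add: r'_def)
  qed
  have ev: "\<forall>k. even (r' k) \<and> r' k \<ge> 2"
  proof
    fix k
    have "(1::nat) \<le> 5 ^ r k" by simp
    thus "even (r' k) \<and> r' k \<ge> 2" by (simp add: r'_def)
  qed
  have "(\<lambda>k. mr (r' k) ^ r' k) = s \<circ> r" by (rule ext) (simp add: r'_def s_def)
  hence "((\<lambda>k. mr (r' k) ^ r' k) \<longlongrightarrow> L) sequentially" using L(3) by simp
  thus ?thesis using L(1) sm ev unfolding U_def by blast
qed

end
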